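(* Let $M,N\ge 0$ be integers, $a_0,\dots,a_M\in\mathbb{R}$, $f_M(x)=\sum_{m=0}^M a_mT_m(x)$. For $0\le n\le N$ and $y\in[-1,1]$ let $\tilde R_n(y)=\int_{-1}^{y}f_M(y-1-t)T_n(t)\,\mathrm{d}t=\sum_{k=0}^{M+N+1}R_{k,n}T_k(y)$, and set $R_{M+N+2,n}:=0$. For $k\ge1$ let $\varepsilon_k=2$ if $k=1$ and $\varepsilon_k=1$ if $k\ge 2$. Then for every $1\le k\le M+N$: $$R_{k,1}=-R_{k,0}+\frac{\varepsilon_k}{2k}R_{k-1,0}-\frac{1}{2k}R_{k+1,0}\qquad(\text{if } N\ge1),$$ $$R_{k,2}=R_{k,0}+\frac{2\varepsilon_k}{k}R_{k-1,1}-\frac{2}{k}R_{k+1,1}\qquad(\text{if } N\ge2),$$ and for $2\le n\le N-1$, $$R_{k,n+1}=\frac{2(-1)^n}{n-1}R_{k,0}+\frac{n+1}{n-1}R_{k,n-1}+\frac{\varepsilon_k(n+1)}{k}R_{k-1,n}-\frac{n+1}{k}R_{k+1,n}.$$ Moreover, for every $1\le n\le N$, $$R_{0,n}=\sum_{j=1}^{M+n+1}(-1)^{j+1}R_{j,n}.$$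
   Context: $T_m(x)=\cos(m\arccos x)$ is the $m$-th Chebyshev polynomial. Each $\tilde R_n$ is a polynomial of degree at most $M+n+1$, so $R_{k,n}=0$ for $k>M+n+1$; $R$ is the $(M+N+2)\times(N+1)$ Chebyshev convolution matrix of $f_M$. *)

theory Defs
  imports "HOL-Analysis.Analysis"
begin

text \<open>Chebyshev polynomials of the first kind, as polynomial functions on all of the
reals (needed since f_M is evaluated at y-1-t, which ranges over [-3,1]).
On [-1,1] they coincide with cos(m * arccos x).\<close>
fun cheb :: "nat \<Rightarrow> real \<Rightarrow> real" where
  "cheb 0 x = 1"
| "cheb (Suc 0) x = x"
| "cheb (Suc (Suc n)) x = 2 * x * cheb (Suc n) x - cheb n x"

definition chebsum :: "nat \<Rightarrow> (nat \<Rightarrow> real) \<Rightarrow> real \<Rightarrow> real" where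
  "chebsum M a x = (\<Sum>m\<le>M. a m * cheb m x)"

definition eps_cheb :: "nat \<Rightarrow> real" where
  "eps_cheb k = (if k = 1 then 2 else 1)"

end

theory Submission
  imports Defs "HOL-Computational_Algebra.Polynomial"
begin


fun chebp :: "nat \<Rightarrow> real poly" where
  "chebp 0 = 1"
| "chebp (Suc 0) = [:0, 1:]"
| "chebp (Suc (Suc n)) = 2 * [:0, 1:] * chebp (Suc n) - chebp n"

fun chebU :: "nat \<Rightarrow> real poly" where
  "chebU 0 = 1"
| "chebU (Suc 0) = [:0, 2:]"
| "chebU (Suc (Suc n)) = 2 * [:0, 1:] * chebU (Suc n) - chebU n"

lemma poly_chebp: "poly (chebp n) x = cheb n x"
  by (induction n rule: chebp.induct) (auto simp: algebra_simps)

lemma poly_chebp_fun: "poly (chebp n) = cheb n"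
  by (rule ext) (simp add: poly_chebp)

lemma chebp_minus1: "poly (chebp n) (-1) = (-1) ^ n"
  by (induction n rule: chebp.induct) (auto simp: algebra_simps)

lemma poly_ext: "(\<And>x. poly p x = poly q x) \<Longrightarrow> p = (q::real poly)"
  by (metis poly_eq_poly_eq_iff ext)

lemma twostep_induct:
  assumes "P 0" "P (Suc 0)" "\<And>n. P n \<Longrightarrow> P (Suc n) \<Longrightarrow> P (Suc (Suc n))"
  shows "P n"
  using assms by (induction n rule: chebp.induct) auto

lemma chebp_U: "chebp (Suc (Suc n)) = [:0, 1:] * chebU (Suc n) - chebU n"
proof (induction n rule: twostep_induct)
  case 1
  then show ?case by (intro poly_ext) (simp add: algebra_simps)
next
  case 2
  then show ?case by (intro poly_ext) (simp add: algebra_simps)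
next
  case (3 n)
  have "chebp (Suc (Suc (Suc (Suc n)))) = 2 * [:0, 1:] * chebp (Suc (Suc (Suc n))) - chebp (Suc (Suc n))"
    by simp
  also have "\<dots> = 2 * [:0, 1:] * ([:0, 1:] * chebU (Suc (Suc n)) - chebU (Suc n)) - ([:0, 1:] * chebU (Suc n) - chebU n)"
    by (simp only: 3)
  also have "\<dots> = [:0, 1:] * chebU (Suc (Suc (Suc n))) - chebU (Suc (Suc n))"
    by (intro poly_ext) (simp add: algebra_simps)
  finally show ?case .
qed

lemma chebp_U2: "smult 2 (chebp (Suc (Suc n))) = chebU (Suc (Suc n)) - chebU n"
  unfolding chebp_U by (intro poly_ext) (simp add: algebra_simps)

lemma chebp_U0: "chebp 0 = chebU 0" and chebp_U1: "smult 2 (chebp 1) = chebU 1"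
  by simp_all

lemma pd2X: "pderiv (2 * [:0,1:] * p) = 2 * p + 2 * [:0,1:] * pderiv (p::real poly)"
  unfolding pderiv_mult by (intro poly_ext) (simp add: numeral_poly pderiv_pCons algebra_simps)

lemma pderiv_chebp: "pderiv (chebp (Suc n)) = of_nat (Suc n) * chebU n"
proof (induction n rule: twostep_induct)
  case 1
  then show ?case by (simp add: pderiv_pCons)
next
  case 2
  then show ?case by (simp only: chebp.simps pderiv_diff pd2X) (intro poly_ext, simp add: pderiv_pCons algebra_simps)
next
  case (3 n)
  have "pderiv (chebp (Suc (Suc (Suc n)))) = 2 * chebp (Suc (Suc n)) + 2 * [:0,1:] * pderiv (chebp (Suc (Suc n))) - pderiv (chebp (Suc n))"
    by (simp only: chebp.simps pderiv_diff pd2X)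
  also have "\<dots> = 2 * ([:0, 1:] * chebU (Suc n) - chebU n) + 2 * [:0,1:] * (of_nat (Suc (Suc n)) * chebU (Suc n)) - of_nat (Suc n) * chebU n"
    by (simp only: 3, simp only: chebp_U)
  also have "\<dots> = of_nat (Suc (Suc (Suc n))) * chebU (Suc (Suc n))"
    by (intro poly_ext) (simp add: algebra_simps)
  finally show ?case .
qed

lemma pderiv_sum: "pderiv (\<Sum>x\<in>A. f x) = (\<Sum>x\<in>A. pderiv (f x :: real poly))"
  by (induction A rule: infinite_finite_induct) (auto simp: pderiv_add)

lemma smult_sum_right: "smult a (\<Sum>x\<in>A. f x) = (\<Sum>x\<in>A. smult a (f x :: real poly))"
  by (induction A rule: infinite_finite_induct) (auto simp: smult_add_right)

lemma X2_pCons: "2 * [:0,1:] * p = pCons 0 (smult 2 (p::real poly))"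
  by (intro poly_ext) simp

lemma chebU_deg: "degree (chebU n) \<le> n \<and> coeff (chebU n) n = 2 ^ n"
proof (induction n rule: twostep_induct)
  case 1
  then show ?case by simp
next
  case 2
  then show ?case by simp
next
  case (3 n)
  have d: "degree (chebU (Suc (Suc n))) \<le> Suc (Suc n)"
    unfolding chebU.simps X2_pCons
    apply (rule degree_diff_le)
    using 3 degree_pCons_le[of 0 "smult 2 (chebU (Suc n))"] apply (simp add: le_trans)
    using 3 by simp
  have "coeff (chebU n) (Suc (Suc n)) = 0"
    using 3 by (intro coeff_eq_0) simp
  then have "coeff (chebU (Suc (Suc n))) (Suc (Suc n)) = 2 ^ Suc (Suc n)"
    unfolding chebU.simps X2_pCons using 3 by simp
  with d show ?case by simp
qed

lemma U_unique:
  assumes "(\<Sum>m\<le>L. smult (c m) (chebU m)) = 0" "m \<le> L"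
  shows "c m = 0"
  using assms
proof (induction L arbitrary: m)
  case 0
  then have "coeff (\<Sum>m\<le>0. smult (c m) (chebU m)) 0 = 0" by simp
  then show ?case using 0 by simp
next
  case (Suc L)
  have z: "(\<Sum>m\<le>L. c m * coeff (chebU m) (Suc L)) = 0"
  proof (intro sum.neutral ballI)
    fix m assume "m \<in> {..L}"
    then have "coeff (chebU m) (Suc L) = 0"
      using chebU_deg[of m] by (intro coeff_eq_0) simp
    then show "c m * coeff (chebU m) (Suc L) = 0" by simp
  qed
  have "0 = coeff (\<Sum>m\<le>Suc L. smult (c m) (chebU m)) (Suc L)"
    by (simp only: Suc.prems(1) coeff_0)
  also have "\<dots> = (\<Sum>m\<le>L. c m * coeff (chebU m) (Suc L)) + c (Suc L) * coeff (chebU (Suc L)) (Suc L)"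
    by (simp only: coeff_sum sum.atMost_Suc coeff_smult coeff_add)
  also have "\<dots> = c (Suc L) * 2 ^ Suc L"
    using chebU_deg[of "Suc L"] z by simp
  finally have cL: "c (Suc L) = 0" by simp
  then have "(\<Sum>m\<le>L. smult (c m) (chebU m)) = 0"
    using Suc.prems(1) by simp
  then show ?case
    using Suc.IH[of m] Suc.prems(2) cL by (cases "m = Suc L") auto
qed

definition Gc :: "(nat \<Rightarrow> real) \<Rightarrow> nat \<Rightarrow> nat \<Rightarrow> real" where
  "Gc e K m = (if m = 0 then 2 * e 0 else e m) - (if m + 2 \<le> K then e (m + 2) else 0)"

lemma Tsum_to_U:
  "smult 2 (\<Sum>k\<le>K. smult (e k) (chebp k)) = (\<Sum>m\<le>K. smult (Gc e K m) (chebU m))"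
proof (induction K)
  case 0
  then show ?case by (simp add: Gc_def)
next
  case (Suc K)
  have eq: "\<And>m. smult (Gc e (Suc K) m) (chebU m) = smult (Gc e K m) (chebU m)
      - (if m + 2 = Suc K then smult (e (Suc K)) (chebU m) else 0)"
    by (auto simp: Gc_def smult_diff_left)
  have ex: "(\<Sum>m\<le>K. (if m + 2 = Suc K then smult (e (Suc K)) (chebU m) else 0))
      = (if K = 0 then 0 else smult (e (Suc K)) (chebU (K - 1)))"
  proof (cases K)
    case 0
    then show ?thesis by simp
  next
    case (Suc j)
    then have "(\<Sum>m\<le>K. (if m + 2 = Suc K then smult (e (Suc K)) (chebU m) else 0))
        = (\<Sum>m\<le>K. (if m = j then smult (e (Suc K)) (chebU m) else 0))"
      by (intro sum.cong) auto
    also have "\<dots> = smult (e (Suc K)) (chebU j)" using Suc by (simp add: sum.delta)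
    finally show ?thesis using Suc by simp
  qed
  have two: "smult 2 (chebp (Suc K)) = chebU (Suc K) - (if K = 0 then 0 else chebU (K - 1))"
    by (cases K) (simp_all only: chebp_U2, simp_all add: numeral_poly)
  have "smult 2 (\<Sum>k\<le>Suc K. smult (e k) (chebp k))
      = (\<Sum>m\<le>K. smult (Gc e K m) (chebU m)) + smult (e (Suc K)) (smult 2 (chebp (Suc K)))"
    using Suc by (simp add: smult_add_right mult.commute)
  also have "\<dots> = (\<Sum>m\<le>K. smult (Gc e (Suc K) m) (chebU m)) + smult (Gc e (Suc K) (Suc K)) (chebU (Suc K))"
    unfolding eq sum_subtractf ex two by (simp add: Gc_def smult_diff_right mult.commute)
  also have "\<dots> = (\<Sum>m\<le>Suc K. smult (Gc e (Suc K) m) (chebU m))"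
    by simp
  finally show ?case .
qed

lemma coeff_rel:
  assumes h: "pderiv (\<Sum>k\<le>K. smult (d k) (chebp k)) = (\<Sum>k\<le>K. smult (e k) (chebp k))"
    and k: "1 \<le> k" "k \<le> K"
  shows "2 * real k * d k = eps_cheb k * e (k - 1) - (if k + 1 \<le> K then e (k + 1) else 0)"
proof -
  obtain K' where K: "K = Suc K'" using k by (cases K) auto
  have "pderiv (\<Sum>k\<le>K. smult (d k) (chebp k)) = (\<Sum>k\<le>K. smult (d k) (pderiv (chebp k)))"
    by (simp add: pderiv_sum pderiv_smult)
  also have "\<dots> = (\<Sum>m\<le>K'. smult (d (Suc m) * real (Suc m)) (chebU m))"
    unfolding K sum.atMost_Suc_shift by (simp add: pderiv_chebp of_nat_mult_conv_smult del: of_nat_Suc)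
  finally have A: "(\<Sum>m\<le>K'. smult (d (Suc m) * real (Suc m)) (chebU m)) = (\<Sum>k\<le>K. smult (e k) (chebp k))"
    using h by simp
  define c where "c m = (if m \<le> K' then 2 * real (Suc m) * d (Suc m) else 0) - Gc e K m" for m
  have "(\<Sum>m\<le>K. smult (if m \<le> K' then 2 * real (Suc m) * d (Suc m) else 0) (chebU m))
      = (\<Sum>m\<le>K'. smult (2 * real (Suc m) * d (Suc m)) (chebU m))"
    unfolding K by (simp del: of_nat_Suc)
  also have "\<dots> = smult 2 (\<Sum>m\<le>K'. smult (d (Suc m) * real (Suc m)) (chebU m))"
    by (simp add: smult_sum_right mult_ac del: of_nat_Suc)
  also have "\<dots> = (\<Sum>m\<le>K. smult (Gc e K m) (chebU m))"
    unfolding A Tsum_to_U ..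
  finally have "(\<Sum>m\<le>K. smult (c m) (chebU m)) = 0"
    unfolding c_def smult_diff_left sum_subtractf by simp
  then have "c (k - 1) = 0"
    using k K by (intro U_unique[of c K]) auto
  moreover obtain j where j: "k = Suc j" using k by (cases k) auto
  ultimately show ?thesis
    using k K by (auto simp: c_def Gc_def eps_cheb_def)
qed



definition Jf :: "(real \<Rightarrow> real) \<Rightarrow> (real \<Rightarrow> real) \<Rightarrow> real \<Rightarrow> real" where
  "Jf f g y = integral {-1..y} (\<lambda>s. f s * g (y - 1 - s))"

lemma subst_int: "integral {-1..y} (\<lambda>t. h (y - 1 - t)) = integral {-1..(y::real)} (h :: real \<Rightarrow> real)"
proof -
  have e: "(\<lambda>t. h (y - 1 - t)) = (\<lambda>t. (\<lambda>u. h (u + (y - 1))) (-t))"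
    by (rule ext) (simp add: algebra_simps)
  have "integral {-1..y} (\<lambda>t. h (y - 1 - t)) = integral {-y..1} (\<lambda>u. h (u + (y - 1)))"
    unfolding e using Henstock_Kurzweil_Integration.integral_reflect_real[where f="\<lambda>u. h (u + (y - 1))" and a="-y" and b=1]
    by simp
  also have "\<dots> = integral {-1 - (y - 1)..y - (y - 1)} (\<lambda>u. h (u + (y - 1)))"
    by simp
  also have "\<dots> = integral {-1..y} h"
    by (rule integral_shift_real_ivl)
  finally show ?thesis .
qed

lemma Iop_eq: "integral {-1..y} (\<lambda>t. f (y - 1 - t) * g t) = Jf f g y"
  unfolding Jf_def using subst_int[where h="\<lambda>s. f s * g (y - 1 - s)" and y=y] by simp

lemma ftc:
  assumes "continuous_on UNIV f" "-1 < y"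
  shows "((\<lambda>z. integral {-1..z} f) has_real_derivative f y) (at y)"
proof -
  have "((\<lambda>z. integral {-1..z} f) has_real_derivative f y) (at y within {-1..y+1})"
    using assms by (intro integral_has_real_derivative continuous_on_subset[OF assms(1)]) auto
  moreover have "at y within {-1..y+1} = at y"
    using assms by (intro at_within_Icc_at) auto
  ultimately show ?thesis by simp
qed

lemma cont_comp: "continuous_on UNIV (g :: real \<Rightarrow> real) \<Longrightarrow> continuous_on S (\<lambda>s. g (y - 1 - s))"
proof -
  assume g: "continuous_on UNIV g"
  have "continuous_on S (\<lambda>s. y - 1 - s)"
    using continuous_on_diff[OF continuous_on_const continuous_on_id, of S "y - 1"] by simp
  then show ?thesis by (rule continuous_on_compose2[OF g]) auto
qed

lemma cont_sub: "continuous_on UNIV (g :: real \<Rightarrow> real) \<Longrightarrow> continuous_on S g"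
  by (rule continuous_on_subset) auto

lemma Jf_decomp:
  assumes f: "continuous_on UNIV f" and g1: "continuous_on UNIV g1" and g2: "continuous_on UNIV g2"
  shows "Jf f (\<lambda>x. g1 x + x * g2 x) y = Jf f g1 y + y * Jf f g2 y + Jf (\<lambda>s. f s * (-1 - s)) g2 y"
proof -
  have cf: "continuous_on S f" for S using cont_sub[OF f] .
  have c1: "continuous_on S (\<lambda>s. g1 (y - 1 - s))" for S using cont_comp[OF g1] .
  have c2: "continuous_on S (\<lambda>s. g2 (y - 1 - s))" for S using cont_comp[OF g2] .
  have i1: "(\<lambda>s. f s * g1 (y - 1 - s)) integrable_on {-1..y}"
    by (intro integrable_continuous_interval continuous_intros cf c1)
  have i2: "(\<lambda>s. y * (f s * g2 (y - 1 - s))) integrable_on {-1..y}"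
    by (intro integrable_continuous_interval continuous_intros cf c2)
  have i3: "(\<lambda>s. (f s * (-1 - s)) * g2 (y - 1 - s)) integrable_on {-1..y}"
    by (intro integrable_continuous_interval continuous_intros cf c2)
  have "Jf f (\<lambda>x. g1 x + x * g2 x) y = integral {-1..y} (\<lambda>s. (f s * g1 (y - 1 - s) + y * (f s * g2 (y - 1 - s))) + (f s * (-1 - s)) * g2 (y - 1 - s))"
    unfolding Jf_def by (rule arg_cong[where f="integral _"]) (auto simp: algebra_simps)
  also have "\<dots> = integral {-1..y} (\<lambda>s. f s * g1 (y - 1 - s)) + integral {-1..y} (\<lambda>s. y * (f s * g2 (y - 1 - s))) + integral {-1..y} (\<lambda>s. (f s * (-1 - s)) * g2 (y - 1 - s))"
    using i1 i2 i3 by (simp add: integral_add integrable_add)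
  also have "\<dots> = Jf f g1 y + y * Jf f g2 y + Jf (\<lambda>s. f s * (-1 - s)) g2 y"
    unfolding Jf_def by simp
  finally show ?thesis .
qed

lemma Jf_lin:
  assumes f: "continuous_on UNIV f" and g1: "continuous_on UNIV g1" and g2: "continuous_on UNIV g2"
  shows "Jf f (\<lambda>x. a * g1 x - b * g2 x) y = a * Jf f g1 y - b * Jf f g2 y"
proof -
  have cf: "continuous_on S f" for S using cont_sub[OF f] .
  have c1: "continuous_on S (\<lambda>s. g1 (y - 1 - s))" for S using cont_comp[OF g1] .
  have c2: "continuous_on S (\<lambda>s. g2 (y - 1 - s))" for S using cont_comp[OF g2] .
  have i1: "(\<lambda>s. a * (f s * g1 (y - 1 - s))) integrable_on {-1..y}"
    by (intro integrable_continuous_interval continuous_intros cf c1)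
  have i2: "(\<lambda>s. b * (f s * g2 (y - 1 - s))) integrable_on {-1..y}"
    by (intro integrable_continuous_interval continuous_intros cf c2)
  have "Jf f (\<lambda>x. a * g1 x - b * g2 x) y = integral {-1..y} (\<lambda>s. a * (f s * g1 (y - 1 - s)) - b * (f s * g2 (y - 1 - s)))"
    unfolding Jf_def by (rule arg_cong[where f="integral _"]) (auto simp: algebra_simps)
  also have "\<dots> = a * Jf f g1 y - b * Jf f g2 y"
    using i1 i2 unfolding Jf_def by (simp add: integral_diff)
  finally show ?thesis .
qed

lemma Jf_deriv:
  assumes "continuous_on UNIV f" "-1 < y"
  shows "((\<lambda>z. Jf f (poly p) z) has_real_derivative (f y * poly p (-1) + Jf f (poly (pderiv p)) y)) (at y)"
  using assms
proof (induction p arbitrary: f rule: pCons_induct)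
  case 0
  then show ?case by (simp add: Jf_def)
next
  case (pCons c p)
  define f1 where "f1 = (\<lambda>s. f s * (-1 - s))"
  have cf1: "continuous_on UNIV f1"
    unfolding f1_def by (intro continuous_intros pCons)
  have cp: "continuous_on UNIV (poly q)" for q :: "real poly"
    by (intro continuous_intros)
  have pc: "poly (pCons c p) = (\<lambda>x. c + x * poly p x)"
    by (rule ext) simp
  have pd: "poly (pderiv (pCons c p)) = (\<lambda>x. poly p x + x * poly (pderiv p) x)"
    by (rule ext) (simp add: pderiv_pCons)
  have fe: "Jf f (poly (pCons c p)) z = c * integral {-1..z} f + z * Jf f (poly p) z + Jf f1 (poly p) z" for z
    using Jf_decomp[OF pCons(3) continuous_on_const cp, of c p z] unfolding pc f1_def
    by (simp add: Jf_def mult.commute)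
  have fe2: "Jf f (poly (pderiv (pCons c p))) y = Jf f (poly p) y + y * Jf f (poly (pderiv p)) y + Jf f1 (poly (pderiv p)) y"
    using Jf_decomp[OF pCons(3) cp cp, of p "pderiv p" y] unfolding pd f1_def .
  have d1: "((\<lambda>z. c * integral {-1..z} f) has_real_derivative c * f y) (at y)"
    by (intro DERIV_cmult ftc pCons)
  have d2: "((\<lambda>z. z * Jf f (poly p) z) has_real_derivative (1 * Jf f (poly p) y + (f y * poly p (-1) + Jf f (poly (pderiv p)) y) * y)) (at y)"
    by (intro DERIV_mult DERIV_ident pCons)
  have d3: "((\<lambda>z. Jf f1 (poly p) z) has_real_derivative (f1 y * poly p (-1) + Jf f1 (poly (pderiv p)) y)) (at y)"
    by (intro pCons cf1)
  have "((\<lambda>z. c * integral {-1..z} f + z * Jf f (poly p) z + Jf f1 (poly p) z) has_real_derivative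
      (c * f y + (1 * Jf f (poly p) y + (f y * poly p (-1) + Jf f (poly (pderiv p)) y) * y) + (f1 y * poly p (-1) + Jf f1 (poly (pderiv p)) y))) (at y)"
    by (intro DERIV_add d1 d2 d3)
  then show ?case
    unfolding fe fe2 by (rule DERIV_cong) (simp add: f1_def algebra_simps)
qed

lemma deriv_ident:
  assumes cf: "continuous_on UNIV f"
    and eq: "\<And>z. z \<in> {-1<..<1} \<Longrightarrow> Jf f (poly U) z = poly Q z"
    and y: "y \<in> {-1<..<1}"
  shows "poly (pderiv Q) y = f y * poly U (-1) + Jf f (poly (pderiv U)) y"
proof -
  have "((\<lambda>z. Jf f (poly U) z) has_real_derivative (f y * poly U (-1) + Jf f (poly (pderiv U)) y)) (at y)"
    using y by (intro Jf_deriv cf) auto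
  then have "(poly Q has_real_derivative (f y * poly U (-1) + Jf f (poly (pderiv U)) y)) (at y)"
    by (rule has_field_derivative_transform_within_open[where S="{-1<..<1}"]) (use y eq in auto)
  moreover have "(poly Q has_real_derivative poly (pderiv Q) y) (at y)"
    by (rule poly_DERIV)
  ultimately show ?thesis by (metis DERIV_unique)
qed

lemma poly_eq_on_Ioo:
  assumes "\<And>y. y \<in> {-1<..<1::real} \<Longrightarrow> poly p y = poly q y"
  shows "p = q"
proof (rule ccontr)
  assume "p \<noteq> q"
  then have "finite {x. poly (p - q) x = 0}" by (intro poly_roots_finite) simp
  moreover have "{-1<..<1::real} \<subseteq> {x. poly (p - q) x = 0}" using assms by auto
  ultimately have "finite {-1<..<1::real}" by (rule finite_subset[rotated])
  then show False using infinite_Ioo[of "-1::real" 1] by simp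
qed



lemma P0_lemma:
  assumes cf: "continuous_on UNIV f"
    and h0: "\<And>z. z \<in> {-1<..<1} \<Longrightarrow> Jf f (cheb 0) z = poly P0 z"
    and y: "y \<in> {-1<..<1}"
  shows "poly (pderiv P0) y = f y"
proof -
  have "Jf f (poly 1) z = poly P0 z" if "z \<in> {-1<..<1}" for z
    using h0[OF that] poly_chebp_fun[of 0] by simp
  from deriv_ident[OF cf this y] show ?thesis by (simp add: Jf_def)
qed

lemma GL:
  fixes f :: "real \<Rightarrow> real" and P :: "nat \<Rightarrow> real poly" and R :: "nat \<Rightarrow> nat \<Rightarrow> real"
  assumes cf: "continuous_on UNIV f"
    and hyp: "\<And>m z. m \<le> N \<Longrightarrow> z \<in> {-1<..<1} \<Longrightarrow> Jf f (cheb m) z = poly (P m) z"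
    and Pdef: "\<And>m. P m = (\<Sum>k\<le>K. smult (R k m) (chebp k))"
    and nN: "Suc n \<le> N" "n' \<le> N"
    and dU: "pderiv (smult \<alpha> (chebp (Suc n)) - smult \<beta> (chebp n')) = chebp n"
  shows "pderiv (\<Sum>k\<le>K. smult (\<alpha> * R k (Suc n) - \<beta> * R k n' - (\<alpha> * (-1) ^ Suc n - \<beta> * (-1) ^ n') * R k 0) (chebp k)) = P n"
proof -
  define U where "U = smult \<alpha> (chebp (Suc n)) - smult \<beta> (chebp n')"
  define Q where "Q = smult \<alpha> (P (Suc n)) - smult \<beta> (P n')"
  define c where "c = \<alpha> * (-1) ^ Suc n - \<beta> * (-1) ^ n'"
  have cU: "poly U (-1) = c" unfolding U_def c_def by (simp only: poly_diff poly_smult chebp_minus1)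
  have ccheb: "continuous_on UNIV (cheb m)" for m
    unfolding poly_chebp_fun[symmetric] by (intro continuous_intros)
  have pU: "poly U = (\<lambda>x. \<alpha> * cheb (Suc n) x - \<beta> * cheb n' x)"
    by (rule ext) (simp add: U_def poly_chebp)
  have JU: "Jf f (poly U) z = poly Q z" if "z \<in> {-1<..<1}" for z
    unfolding pU Jf_lin[OF cf ccheb ccheb] using that nN hyp by (simp add: Q_def)
  have "poly (pderiv (Q - smult c (P 0))) y = poly (P n) y" if y: "y \<in> {-1<..<1}" for y
  proof -
    have "poly (pderiv Q) y = f y * c + Jf f (poly (chebp n)) y"
      using deriv_ident[OF cf JU y] cU dU unfolding U_def by simp
    also have "Jf f (poly (chebp n)) y = poly (P n) y"
      using hyp[of n y] nN y by (simp add: poly_chebp_fun)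
    also have "f y = poly (pderiv (P 0)) y"
      using P0_lemma[OF cf _ y, of "P 0"] hyp[of 0] by simp
    finally show ?thesis by (simp add: pderiv_diff pderiv_smult)
  qed
  then have "pderiv (Q - smult c (P 0)) = P n" by (rule poly_eq_on_Ioo)
  moreover have "Q - smult c (P 0) = (\<Sum>k\<le>K. smult (\<alpha> * R k (Suc n) - \<beta> * R k n' - c * R k 0) (chebp k))"
    unfolding Q_def Pdef smult_sum_right smult_diff_left sum_subtractf by simp
  ultimately show ?thesis by (simp add: c_def)
qed

lemma alg3:
  fixes r1 rm r0 a b e sg k m :: real
  assumes m: "m \<ge> 2" and kpos: "k > 0"
    and r: "2 * k * (1 / (2 * (m + 1)) * r1 - 1 / (2 * (m - 1)) * rm - (1 / (2 * (m + 1)) * (- sg) - 1 / (2 * (m - 1)) * (- sg)) * r0) = e * a - b"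
  shows "r1 = 2 * sg / (m - 1) * r0 + (m + 1) / (m - 1) * rm + e * (m + 1) / k * a - (m + 1) / k * b"
proof -
  have m1: "m - 1 > 0" "m + 1 > 0" using m by auto
  have h0: "1 / (2 * (m + 1)) * r1 - 1 / (2 * (m - 1)) * rm - (1 / (2 * (m + 1)) * (- sg) - 1 / (2 * (m - 1)) * (- sg)) * r0 = (e * a - b) / (2 * k)"
    using r kpos by (subst eq_divide_eq) (simp add: mult.commute)
  have h1: "1 / (2 * (m + 1)) * r1 = (e * a - b) / (2 * k) + 1 / (2 * (m - 1)) * rm + (1 / (2 * (m + 1)) * (- sg) - 1 / (2 * (m - 1)) * (- sg)) * r0"
    using h0 by linarith
  have h2: "r1 = (2 * (m + 1)) * (1 / (2 * (m + 1)) * r1)" using m1 by simp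
  also have "\<dots> = (2 * (m + 1)) * ((e * a - b) / (2 * k) + 1 / (2 * (m - 1)) * rm + (1 / (2 * (m + 1)) * (- sg) - 1 / (2 * (m - 1)) * (- sg)) * r0)"
    unfolding h1 ..
  also have "\<dots> = 2 * (m + 1) * ((e * a - b) / (2 * k)) + 2 * (m + 1) * (1 / (2 * (m - 1)) * rm) + 2 * (m + 1) * ((1 / (2 * (m + 1)) * (- sg) - 1 / (2 * (m - 1)) * (- sg)) * r0)"
    by (simp only: distrib_left)
  also have "2 * (m + 1) * ((e * a - b) / (2 * k)) = e * (m + 1) / k * a - (m + 1) / k * b"
    using kpos by (simp add: field_simps)
  also have "2 * (m + 1) * (1 / (2 * (m - 1)) * rm) = (m + 1) / (m - 1) * rm"
    using m1 by (simp add: field_simps)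
  also have "(1 / (2 * (m + 1)) * (- sg) - 1 / (2 * (m - 1)) * (- sg)) = sg / ((m - 1) * (m + 1))"
  proof -
    have "1 / (2 * (m - 1)) - 1 / (2 * (m + 1)) = 1 / ((m - 1) * (m + 1))"
      using m1 by (simp add: divide_simps) (simp add: algebra_simps)
    then show ?thesis by (simp add: algebra_simps)
  qed
  also have "2 * (m + 1) * (sg / ((m - 1) * (m + 1)) * r0) = 2 * sg / (m - 1) * r0"
  proof -
    have nz: "m - 1 \<noteq> 0" "m + 1 \<noteq> 0" using m1 by auto
    have "1 * 1 < m * m" using m1 by (intro mult_strict_mono) auto
    then have nz2: "m * m - 1 \<noteq> 0" by simp
    show ?thesis using nz nz2 by (simp add: field_simps)
  qed
  finally show ?thesis by simp
qed

theorem theorem3p3: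
  fixes M N :: nat and a :: "nat \<Rightarrow> real" and R :: "nat \<Rightarrow> nat \<Rightarrow> real"
  assumes expansion: "\<And>n y. n \<le> N \<Longrightarrow> y \<in> {-1..1} \<Longrightarrow>
      integral {-1..y} (\<lambda>t. chebsum M a (y - 1 - t) * cheb n t)
        = (\<Sum>k\<le>M + N + 1. R k n * cheb k y)"
    and top_zero: "\<And>n. n \<le> N \<Longrightarrow> R (M + N + 2) n = 0"
  shows "(\<forall>k. 1 \<le> k \<and> k \<le> M + N \<longrightarrow>
            (N \<ge> 1 \<longrightarrow>
               R k 1 = - R k 0 + eps_cheb k / (2 * real k) * R (k - 1) 0
                       - 1 / (2 * real k) * R (k + 1) 0)
          \<and> (N \<ge> 2 \<longrightarrow>
               R k 2 = R k 0 + 2 * eps_cheb k / real k * R (k - 1) 1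
                       - 2 / real k * R (k + 1) 1)
          \<and> (\<forall>n. 2 \<le> n \<and> n + 1 \<le> N \<longrightarrow>
               R k (n + 1) = 2 * (-1) ^ n / (real n - 1) * R k 0
                 + (real n + 1) / (real n - 1) * R k (n - 1)
                 + eps_cheb k * (real n + 1) / real k * R (k - 1) n
                 - (real n + 1) / real k * R (k + 1) n))
       \<and> (\<forall>n. 1 \<le> n \<and> n \<le> N \<longrightarrow>
            R 0 n = (\<Sum>j = 1..M + n + 1. (-1) ^ (j + 1) * R j n))"
proof -
  define f where "f = chebsum M a"
  define Fp where "Fp = (\<Sum>m\<le>M. smult (a m) (chebp m))"
  define K where "K = M + N + 1"
  define P where "P = (\<lambda>m. (\<Sum>k\<le>K. smult (R k m) (chebp k)))"
  have Pd: "\<And>m. P m = (\<Sum>k\<le>K. smult (R k m) (chebp k))" by (simp add: P_def)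
  have fFp: "f = poly Fp" unfolding f_def Fp_def chebsum_def
    by (rule ext) (simp add: poly_sum poly_chebp)
  have cf: "continuous_on UNIV f" unfolding fFp by (intro continuous_intros)
  have hypc: "Jf f (cheb m) z = poly (P m) z" if "m \<le> N" "z \<in> {-1..1}" for m z
  proof -
    have "Jf f (cheb m) z = integral {-1..z} (\<lambda>t. chebsum M a (z - 1 - t) * cheb m t)"
      unfolding f_def Iop_eq ..
    also have "\<dots> = (\<Sum>k\<le>M + N + 1. R k m * cheb k z)"
      by (rule expansion) (use that in auto)
    also have "\<dots> = poly (P m) z" unfolding Pd K_def by (simp add: poly_sum poly_chebp)
    finally show ?thesis .
  qed
  have hyp: "\<And>m z. m \<le> N \<Longrightarrow> z \<in> {-1<..<1} \<Longrightarrow> Jf f (cheb m) z = poly (P m) z"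
    using hypc by auto
  have REL: "2 * real k * (\<alpha> * R k (Suc n) - \<beta> * R k n' - (\<alpha> * (-1) ^ Suc n - \<beta> * (-1) ^ n') * R k 0)
      = eps_cheb k * R (k - 1) n - R (k + 1) n"
    if nn: "Suc n \<le> N" "n' \<le> N" "pderiv (smult \<alpha> (chebp (Suc n)) - smult \<beta> (chebp n')) = chebp n"
      and kk: "1 \<le> k" "k \<le> K" for n n' \<alpha> \<beta> k
  proof -
    have "pderiv (\<Sum>k\<le>K. smult (\<alpha> * R k (Suc n) - \<beta> * R k n' - (\<alpha> * (-1) ^ Suc n - \<beta> * (-1) ^ n') * R k 0) (chebp k))
        = (\<Sum>k\<le>K. smult (R k n) (chebp k))"
      using GL[OF cf hyp Pd nn] unfolding Pd .
    from coeff_rel[OF this kk] have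
      "2 * real k * (\<alpha> * R k (Suc n) - \<beta> * R k n' - (\<alpha> * (-1) ^ Suc n - \<beta> * (-1) ^ n') * R k 0)
        = eps_cheb k * R (k - 1) n - (if k + 1 \<le> K then R (k + 1) n else 0)" .
    moreover have "(if k + 1 \<le> K then R (k + 1) n else 0) = R (k + 1) n"
      using top_zero[of n] nn kk by (auto simp: K_def le_Suc_eq)
    ultimately show ?thesis by simp
  qed
  have dU0: "pderiv (smult 1 (chebp (Suc 0)) - smult 0 (chebp 0)) = chebp 0"
    by (simp add: pderiv_pCons)
  have dU1: "pderiv (smult (1/4) (chebp (Suc 1)) - smult 0 (chebp 0)) = chebp 1"
  proof -
    have "pderiv (chebp (Suc 1)) = of_nat (Suc 1) * chebU 1" by (rule pderiv_chebp)
    then show ?thesis by (simp only: pderiv_diff pderiv_smult) (intro poly_ext, simp)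
  qed
  have dUn: "pderiv (smult (1 / (2 * (real n + 1))) (chebp (Suc n)) - smult (1 / (2 * (real n - 1))) (chebp (n - 1))) = chebp n"
    if "2 \<le> n" for n
  proof -
    define j where "j = n - 2"
    have j: "n = Suc (Suc j)" using that unfolding j_def by simp
    have d1: "pderiv (chebp (Suc n)) = of_nat (Suc n) * chebU n" by (rule pderiv_chebp)
    have d2: "pderiv (chebp (n - 1)) = of_nat (Suc j) * chebU j"
      using pderiv_chebp[of j] unfolding j by (simp only: diff_Suc_1)
    have e2: "2 * poly (chebp n) x = poly (chebU n) x - poly (chebU j) x" for x
    proof -
      have "poly (smult 2 (chebp (Suc (Suc j)))) x = poly (chebU (Suc (Suc j)) - chebU j) x"
        by (simp only: chebp_U2)
      then show ?thesis unfolding j by (simp only: poly_smult poly_diff)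
    qed
    have a1: "1 / (2 * (real n + 1)) * real (Suc n) = 1 / 2"
      by (simp add: field_simps)
    have nj: "real n - 1 = real (Suc j)" unfolding j by simp
    have a2: "1 / (2 * (real n - 1)) * real (Suc j) = 1 / 2"
      unfolding nj by (simp add: field_simps del: of_nat_Suc)
    show ?thesis
    proof (intro poly_ext)
      fix x
      have "poly (pderiv (smult (1 / (2 * (real n + 1))) (chebp (Suc n)) - smult (1 / (2 * (real n - 1))) (chebp (n - 1)))) x
          = 1 / (2 * (real n + 1)) * (real (Suc n) * poly (chebU n) x) - 1 / (2 * (real n - 1)) * (real (Suc j) * poly (chebU j) x)"
        by (simp only: pderiv_diff pderiv_smult d1 d2 poly_diff poly_smult poly_mult poly_of_nat)
      also have "\<dots> = (1 / (2 * (real n + 1)) * real (Suc n)) * poly (chebU n) x - (1 / (2 * (real n - 1)) * real (Suc j)) * poly (chebU j) x"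
        by (simp only: mult.assoc)
      also have "\<dots> = (poly (chebU n) x - poly (chebU j) x) / 2"
        unfolding a1 a2 by simp
      also have "\<dots> = poly (chebp n) x" using e2[of x] by simp
      finally show "poly (pderiv (smult (1 / (2 * (real n + 1))) (chebp (Suc n)) - smult (1 / (2 * (real n - 1))) (chebp (n - 1)))) x = poly (chebp n) x" .
    qed
  qed
  have part1: "(N \<ge> 1 \<longrightarrow>
               R k 1 = - R k 0 + eps_cheb k / (2 * real k) * R (k - 1) 0
                       - 1 / (2 * real k) * R (k + 1) 0)
          \<and> (N \<ge> 2 \<longrightarrow>
               R k 2 = R k 0 + 2 * eps_cheb k / real k * R (k - 1) 1
                       - 2 / real k * R (k + 1) 1)
          \<and> (\<forall>n. 2 \<le> n \<and> n + 1 \<le> N \<longrightarrow>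
               R k (n + 1) = 2 * (-1) ^ n / (real n - 1) * R k 0
                 + (real n + 1) / (real n - 1) * R k (n - 1)
                 + eps_cheb k * (real n + 1) / real k * R (k - 1) n
                 - (real n + 1) / real k * R (k + 1) n)"
    if k: "1 \<le> k" "k \<le> M + N" for k
  proof (intro conjI impI allI)
    have kK: "k \<le> K" using k by (simp add: K_def)
    have kpos: "real k > 0" using k by simp
    {
      assume "N \<ge> 1"
      then have r: "2 * real k * (1 * R k (Suc 0) - 0 * R k 0 - (1 * (-1) ^ Suc 0 - 0 * (-1) ^ 0) * R k 0)
          = eps_cheb k * R (k - 1) 0 - R (k + 1) 0"
        using REL[OF _ _ dU0 k(1) kK] by simp
      have h: "R k 1 + R k 0 = (eps_cheb k * R (k - 1) 0 - R (k + 1) 0) / (2 * real k)"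
        using r kpos by (subst eq_divide_eq) (simp add: algebra_simps)
      then show "R k 1 = - R k 0 + eps_cheb k / (2 * real k) * R (k - 1) 0 - 1 / (2 * real k) * R (k + 1) 0"
        by (simp add: diff_divide_distrib algebra_simps)
    }
    {
      assume "N \<ge> 2"
      then have r0: "2 * real k * (1/4 * R k (Suc 1) - 0 * R k 0 - (1/4 * (-1) ^ Suc 1 - 0 * (-1) ^ 0) * R k 0)
          = eps_cheb k * R (k - 1) 1 - R (k + 1) 1"
        using REL[OF _ _ dU1 k(1) kK] by simp
      have s2: "Suc 1 = 2" by simp
      have r: "2 * real k * (1/4 * R k 2 - 1/4 * R k 0) = eps_cheb k * R (k - 1) 1 - R (k + 1) 1"
        using r0 unfolding s2 by simp
      have h: "R k 2 - R k 0 = (2 * eps_cheb k * R (k - 1) 1 - 2 * R (k + 1) 1) / real k"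
        using r kpos by (subst eq_divide_eq) (simp add: algebra_simps)
      then show "R k 2 = R k 0 + 2 * eps_cheb k / real k * R (k - 1) 1 - 2 / real k * R (k + 1) 1"
        by (simp add: diff_divide_distrib algebra_simps)
    }
    {
      fix n assume n: "2 \<le> n \<and> n + 1 \<le> N"
      define j where "j = n - 2"
      have j: "n = Suc (Suc j)" using n unfolding j_def by arith
      have n2: "2 \<le> n" and nN: "Suc n \<le> N" and n1N: "n - 1 \<le> N" using n by auto
      have r: "2 * real k * (1 / (2 * (real n + 1)) * R k (Suc n) - 1 / (2 * (real n - 1)) * R k (n - 1)
           - (1 / (2 * (real n + 1)) * (-1) ^ Suc n - 1 / (2 * (real n - 1)) * (-1) ^ (n - 1)) * R k 0)
          = eps_cheb k * R (k - 1) n - R (k + 1) n"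
        by (rule REL[OF nN n1N dUn[OF n2] k(1) kK])
      have p1: "(-1::real) ^ Suc n= - ((-1) ^ n)" by simp
      have p2: "(-1::real) ^ (n - 1)= - ((-1) ^ n)" unfolding j by simp
      have m2: "real n \<ge> 2" using n2 by simp
      have "R k (Suc n) = 2 * (-1) ^ n / (real n - 1) * R k 0
                 + (real n + 1) / (real n - 1) * R k (n - 1)
                 + eps_cheb k * (real n + 1) / real k * R (k - 1) n
                 - (real n + 1) / real k * R (k + 1) n"
        by (rule alg3[OF m2 kpos r[unfolded p1 p2]])
      then show "R k (n + 1) = 2 * (-1) ^ n / (real n - 1) * R k 0
                 + (real n + 1) / (real n - 1) * R k (n - 1)
                 + eps_cheb k * (real n + 1) / real k * R (k - 1) n
                 - (real n + 1) / real k * R (k + 1) n"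
        by simp
    }
  qed
  define Z where "Z = (\<lambda>m. \<forall>j. M + m + 1 < j \<and> j \<le> K + 1 \<longrightarrow> R j m = 0)"
  have Z0: "Z 0"
  proof -
    define ea where "ea = (\<lambda>k. if k \<le> M then a k else 0)"
    have y: "poly (pderiv (P 0)) y = poly Fp y" if "y \<in> {-1<..<1}" for y
      using P0_lemma[OF cf _ that, of "P 0"] hyp[of 0] fFp by simp
    have "(\<Sum>k\<le>K. smult (ea k) (chebp k)) = (\<Sum>k\<le>M. smult (ea k) (chebp k))"
      by (rule sum.mono_neutral_right) (auto simp: K_def ea_def)
    also have "\<dots> = Fp" unfolding Fp_def ea_def by (rule sum.cong) auto
    finally have "pderiv (\<Sum>k\<le>K. smult (R k 0) (chebp k)) = (\<Sum>k\<le>K. smult (ea k) (chebp k))"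
      using poly_eq_on_Ioo[OF y] unfolding Pd by simp
    note cr = coeff_rel[OF this]
    show ?thesis unfolding Z_def
    proof (intro allI impI)
      fix j assume j: "M + 0 + 1 < j \<and> j \<le> K + 1"
      show "R j 0 = 0"
      proof (cases "j = K + 1")
        case True then show ?thesis using top_zero[of 0] by (simp add: K_def)
      next
        case False
        then have "2 * real j * R j 0 = eps_cheb j * ea (j - 1) - (if j + 1 \<le> K then ea (j + 1) else 0)"
          using cr[of j] j by simp
        moreover have "ea (j - 1) = 0" "ea (j + 1) = 0" using j by (auto simp: ea_def)
        ultimately have "2 * real j * R j 0 = 0" by simp
        then show ?thesis using j by simp
      qed
    qed
  qed
  have Zstep: "Z (Suc n)"
    if "Z n" "Z n'" "n' \<le> n" "\<alpha> \<noteq> 0" "Suc n \<le> N"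
      and rel: "\<And>k. 1 \<le> k \<Longrightarrow> k \<le> K \<Longrightarrow> 2 * real k * (\<alpha> * R k (Suc n) - \<beta> * R k n' - c * R k 0)
        = eps_cheb k * R (k - 1) n - R (k + 1) n" for n n' \<alpha> \<beta> c
    unfolding Z_def
  proof (intro allI impI)
    fix j assume j: "M + Suc n + 1 < j \<and> j \<le> K + 1"
    show "R j (Suc n) = 0"
    proof (cases "j = K + 1")
      case True then show ?thesis using top_zero[of "Suc n"] that by (simp add: K_def)
    next
      case False
      have Zn: "\<And>i. M + n + 1 < i \<Longrightarrow> i \<le> K + 1 \<Longrightarrow> R i n = 0"
        using that(1) unfolding Z_def by blast
      have Zn': "\<And>i. M + n' + 1 < i \<Longrightarrow> i \<le> K + 1 \<Longrightarrow> R i n' = 0"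
        using that(2) unfolding Z_def by blast
      have Z0': "\<And>i. M + 0 + 1 < i \<Longrightarrow> i \<le> K + 1 \<Longrightarrow> R i 0 = 0"
        using Z0 unfolding Z_def by blast
      have "R j n' = 0" using Zn'[of j] j that(3) by simp
      moreover have "R j 0 = 0" using Z0'[of j] j by simp
      moreover have "R (j - 1) n = 0" using j by (intro Zn) arith+
      moreover have "R (j + 1) n = 0" using Zn[of "j + 1"] j False by simp
      ultimately have "R j n' = 0" "R j 0 = 0" "R (j - 1) n = 0" "R (j + 1) n = 0" by auto
      then have "2 * real j * (\<alpha> * R j (Suc n)) = 0"
        using rel[of j] j False by simp
      then show ?thesis using j that(4) by simp
    qed
  qed
  have Zall: "m \<le> N \<longrightarrow> Z m" for m
  proof (induction m rule: less_induct)
    case (less m)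
    show ?case
    proof (cases m)
      case 0 then show ?thesis using Z0 by simp
    next
      case (Suc m1)
      show ?thesis
      proof (cases m1)
        case 0
        show ?thesis
        proof
          assume mN: "m \<le> N"
          have "Z (Suc 0)"
            by (rule Zstep[of 0 0 1 0 "1 * (-1) ^ Suc 0 - 0 * (-1) ^ 0"]) (use Z0 mN Suc 0 REL[OF _ _ dU0] in auto)
          then show "Z m" using Suc 0 by simp
        qed
      next
        case (Suc m2)
        show ?thesis
        proof
          assume mN: "m \<le> N"
          show "Z m"
          proof (cases m2)
            case 0
            have "Z 1" using less[of 1] mN \<open>m = Suc m1\<close> Suc 0 by simp
            have "Z (Suc 1)"
              by (rule Zstep[of 1 0 "1/4" 0 "1/4 * (-1) ^ Suc 1 - 0 * (-1) ^ 0"])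
                 (use Z0 \<open>Z 1\<close> mN \<open>m = Suc m1\<close> Suc 0 REL[OF _ _ dU1] in auto)
            then show "Z m" using \<open>m = Suc m1\<close> Suc 0 by simp
          next
            case (Suc m3)
            define n where "n = m1"
            have n2: "2 \<le> n" using \<open>m1 = Suc m2\<close> Suc by (simp add: n_def)
            have "Z n" using less[of n] mN \<open>m = Suc m1\<close> by (simp add: n_def)
            have "Z (n - 1)" using less[of "n - 1"] mN \<open>m = Suc m1\<close> by (simp add: n_def)
            have "Z (Suc n)"
              by (rule Zstep[of n "n - 1" "1 / (2 * (real n + 1))" "1 / (2 * (real n - 1))"
                    "1 / (2 * (real n + 1)) * (-1) ^ Suc n - 1 / (2 * (real n - 1)) * (-1) ^ (n - 1)"])
                 (use Z0 \<open>Z n\<close> \<open>Z (n - 1)\<close> mN \<open>m = Suc m1\<close> n2 REL[OF _ _ dUn[OF n2]] in \<open>auto simp: n_def\<close>)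
            then show "Z m" using \<open>m = Suc m1\<close> by (simp add: n_def)
          qed
        qed
      qed
    qed
  qed
  have part2: "R 0 n = (\<Sum>j = 1..M + n + 1. (-1) ^ (j + 1) * R j n)" if n: "1 \<le> n" "n \<le> N" for n
  proof -
    have "0 = Jf f (cheb n) (-1)" by (simp add: Jf_def)
    also have "\<dots> = poly (P n) (-1)" using hypc[of n "-1"] n by simp
    also have "\<dots> = (\<Sum>k\<le>K. R k n * (-1) ^ k)" unfolding Pd by (simp add: poly_sum chebp_minus1)
    also have "\<dots> = R 0 n + (\<Sum>i\<le>M + N. R (Suc i) n * (-1) ^ Suc i)"
      unfolding K_def by (simp only: Suc_eq_plus1[symmetric] sum.atMost_Suc_shift) simp
    also have "(\<Sum>i\<le>M + N. R (Suc i) n * (-1) ^ Suc i) = (\<Sum>i\<le>M + n. R (Suc i) n * (-1) ^ Suc i)"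
    proof (rule sum.mono_neutral_right)
      show "\<forall>i\<in>{..M + N} - {..M + n}. R (Suc i) n * (-1) ^ Suc i = 0"
        using Zall[of n] n unfolding Z_def by (auto simp: K_def)
    qed (use n in auto)
    also have "(\<Sum>i\<le>M + n. R (Suc i) n * (-1) ^ Suc i) = - (\<Sum>j = 1..M + n + 1. (-1) ^ (j + 1) * R j n)"
    proof -
      have "(\<Sum>j = 1..M + n + 1. (-1) ^ (j + 1) * R j n) = (\<Sum>j = Suc 0..Suc (M + n). (-1) ^ (j + 1) * R j n)"
        by simp
      also have "\<dots> = (\<Sum>i = 0..M + n. (-1) ^ (Suc i + 1) * R (Suc i) n)"
        by (rule sum.shift_bounds_cl_Suc_ivl)
      also have "\<dots> = - (\<Sum>i\<le>M + n. R (Suc i) n * (-1) ^ Suc i)"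
        by (simp add: atLeast0AtMost sum_negf[symmetric] mult.commute)
      finally show ?thesis by simp
    qed
    finally show ?thesis by simp
  qed
  show ?thesis using part1 part2 by blast
qed


end
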